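(* Let $G$ be a graph on an $n$-element vertex set such that every $3$-subset of the vertices contains an edge of $G$. Then there exist a labeling of the vertex set by $[n]$ and a combinatorial shifting $G^c$ of (the edge set of) $G$ such that $G^c\supseteq B(n)=\{\{a,b\}:1\le a<b\le n,\ a+b\le n\}$.
   Context: For $i<j$, the operation $\mathrm{sh}_{ij}$ on a family $\mathcal F$ of $k$-subsets of $[n]$ replaces each $F\in\mathcal F$ with $j\in F$, $i\notin F$ and $(F\setminus\{j\})\cup\{i\}\notin\mathcal F$ by $(F\setminus\{j\})\cup\{i\}$, and leaves the other members unchanged. A family is shifted if for every $F$ in it and $i<j$ with $j\in F$, $i\notin F$, also $(F\setminus\{j\})\cup\{i\}$ is in it. A combinatorial shifting of $\mathcal F$ is any family obtained from $\mathcal F$ by applying a finite sequence of operations $\mathrm{sh}_{ij}$ ($i<j$) until a shifted family is reached. *)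

theory Defs
  imports Main
begin

definition sh :: "nat \<Rightarrow> nat \<Rightarrow> nat set set \<Rightarrow> nat set set" where
  "sh i j \<F> =
     (\<lambda>F. if j \<in> F \<and> i \<notin> F \<and> insert i (F - {j}) \<notin> \<F>
          then insert i (F - {j}) else F) ` \<F>"

definition shifted :: "nat \<Rightarrow> nat set set \<Rightarrow> bool" where
  "shifted n \<F> \<longleftrightarrow>
     (\<forall>F\<in>\<F>. \<forall>i\<in>{1..n}. \<forall>j\<in>{1..n}. i < j \<and> j \<in> F \<and> i \<notin> F \<longrightarrow> insert i (F - {j}) \<in> \<F>)"

definition sh_step :: "nat \<Rightarrow> nat set set \<Rightarrow> nat set set \<Rightarrow> bool" where
  "sh_step n \<F> \<G> \<longleftrightarrow> (\<exists>i j. 1 \<le> i \<and> i < j \<and> j \<le> n \<and> \<G> = sh i j \<F>)"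

definition comb_shifting :: "nat \<Rightarrow> nat set set \<Rightarrow> nat set set \<Rightarrow> bool" where
  "comb_shifting n \<F> \<H> \<longleftrightarrow> (sh_step n)\<^sup>*\<^sup>* \<F> \<H> \<and> shifted n \<H>"

definition B :: "nat \<Rightarrow> nat set set" where
  "B n = {{a, b} | a b. 1 \<le> a \<and> a < b \<and> b \<le> n \<and> a + b \<le> n}"

end

theory Submission imports Defs begin

lemma sh_keep: "F \<in> \<F> \<Longrightarrow> j \<notin> F \<or> i \<in> F \<Longrightarrow> F \<in> sh i j \<F>"
  unfolding sh_def by (rule image_eqI[of _ _ F]) auto

lemma sh_target: "F \<in> \<F> \<Longrightarrow> j \<in> F \<Longrightarrow> i \<notin> F \<Longrightarrow> insert i (F - {j}) \<in> sh i j \<F>"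
proof (cases "insert i (F - {j}) \<in> \<F>")
  case True
  then show ?thesis by (intro sh_keep) auto
next
  case False
  assume "F \<in> \<F>" "j \<in> F" "i \<notin> F"
  then show ?thesis using False unfolding sh_def by (intro image_eqI[of _ _ F]) auto
qed

lemma sh_keep2: "F \<in> \<F> \<Longrightarrow> insert i (F - {j}) \<in> \<F> \<Longrightarrow> F \<in> sh i j \<F>"
  unfolding sh_def by (rule image_eqI[of _ _ F]) auto

fun famseq :: "nat \<Rightarrow> nat set set \<Rightarrow> nat \<Rightarrow> nat set set" where
  "famseq n G 0 = G"
| "famseq n G (Suc k) = sh (Suc k) (n - k) (famseq n G k)"

lemma famseq_props:
  assumes C: "\<forall>k x. 1 \<le> k \<longrightarrow> k < x \<longrightarrow> x + k \<le> n \<longrightarrow> {k,x} \<in> G \<or> {x, n+1-k} \<in> G"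
  shows "2*k \<le> n \<Longrightarrow> (sh_step n)\<^sup>*\<^sup>* G (famseq n G k) \<and>
     (\<forall>F\<in>G. F \<subseteq> {k+1..n-k} \<longrightarrow> F \<in> famseq n G k) \<and>
     (\<forall>a b. 1 \<le> a \<longrightarrow> a \<le> k \<longrightarrow> a < b \<longrightarrow> a + b \<le> n \<longrightarrow> {a,b} \<in> famseq n G k)"
proof (induction k)
  case 0
  then show ?case by auto
next
  case (Suc k)
  then have IH: "(sh_step n)\<^sup>*\<^sup>* G (famseq n G k)"
     "\<And>F. F\<in>G \<Longrightarrow> F \<subseteq> {k+1..n-k} \<Longrightarrow> F \<in> famseq n G k"
     "\<And>a b. 1 \<le> a \<Longrightarrow> a \<le> k \<Longrightarrow> a < b \<Longrightarrow> a + b \<le> n \<Longrightarrow> {a,b} \<in> famseq n G k"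
    by auto
  have kn: "2 * Suc k \<le> n" by fact
  have step: "sh_step n (famseq n G k) (famseq n G (Suc k))"
    unfolding sh_step_def using kn by (intro exI[of _ "Suc k"] exI[of _ "n - k"]) auto
  have A: "\<forall>F\<in>G. F \<subseteq> {Suc k+1..n-Suc k} \<longrightarrow> F \<in> famseq n G (Suc k)"
  proof (intro ballI impI)
    fix F assume F: "F \<in> G" "F \<subseteq> {Suc k+1..n-Suc k}"
    have "F \<subseteq> {k+1..n-k}" using F(2) by (auto dest!: subsetD)
    then have "F \<in> famseq n G k" using IH(2)[of F] F(1) by auto
    moreover have "n - k \<notin> F" using F(2) kn by (auto dest!: subsetD)
    ultimately show "F \<in> famseq n G (Suc k)" by (simp add: sh_keep)
  qed
  have Bp: "\<forall>a b. 1 \<le> a \<longrightarrow> a \<le> Suc k \<longrightarrow> a < b \<longrightarrow> a + b \<le> n \<longrightarrow> {a,b} \<in> famseq n G (Suc k)"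
  proof (intro allI impI)
    fix a b assume ab: "1 \<le> a" "a \<le> Suc k" "a < b" "a + b \<le> n"
    show "{a,b} \<in> famseq n G (Suc k)"
    proof (cases "a \<le> k")
      case True
      then have in0: "{a,b} \<in> famseq n G k" using IH(3) ab by auto
      show ?thesis
      proof (cases "b = n - k")
        case False
        then have "n - k \<notin> {a,b}" using True kn by auto
        then show ?thesis using in0 by (simp add: sh_keep)
      next
        case bT: True
        have "{a, Suc k} \<in> famseq n G k" using IH(3)[of a "Suc k"] ab True kn by auto
        moreover have "insert (Suc k) ({a,b} - {n-k}) = {a, Suc k}" using bT True kn by auto
        ultimately show ?thesis using in0 by (simp add: sh_keep2)
      qed
    next
      case False
      then have a: "a = Suc k" using ab by auto
      have "{a,b} \<in> G \<or> {b, n+1-a} \<in> G" using C ab by auto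
      then show ?thesis
      proof
        assume "{a,b} \<in> G"
        moreover have "{a,b} \<subseteq> {k+1..n-k}" using ab a by auto
        ultimately have "{a,b} \<in> famseq n G k" using IH(2) by blast
        then show ?thesis using a by (simp add: sh_keep)
      next
        assume h: "{b, n+1-a} \<in> G"
        moreover have "{b, n+1-a} \<subseteq> {k+1..n-k}" "n+1-a = n-k" using ab a by auto
        ultimately have "{b, n - k} \<in> famseq n G k" using IH(2) by metis
        from sh_target[OF this, of "n-k" "Suc k"]
        have "insert (Suc k) ({b, n - k} - {n - k}) \<in> famseq n G (Suc k)"
          using ab a by auto
        moreover have "insert (Suc k) ({b, n - k} - {n - k}) = {a,b}" using ab a by auto
        ultimately show ?thesis by simp
      qed
    qed
  qed
  show ?case using IH(1) step A Bp by auto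
qed


definition wt :: "nat set set \<Rightarrow> nat" where "wt \<H> = (\<Sum>F\<in>\<H>. \<Sum>F)"

lemma sum_shift_less:
  assumes "finite F" "j \<in> F" "i \<notin> F" "(i::nat) < j"
  shows "\<Sum>(insert i (F - {j})) < \<Sum>F"
proof -
  have "\<Sum>(insert i (F - {j})) = i + \<Sum>(F - {j})" using assms by simp
  moreover have "\<Sum>F = j + \<Sum>(F - {j})" using assms by (simp add: sum.remove)
  ultimately show ?thesis using assms by simp
qed

lemma sh_weight:
  assumes fin: "finite \<H>" "\<forall>F\<in>\<H>. finite F" and ij: "(i::nat) < j"
    and F0: "F0 \<in> \<H>" "j \<in> F0" "i \<notin> F0" "insert i (F0 - {j}) \<notin> \<H>"
  shows "wt (sh i j \<H>) < wt \<H>"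
proof -
  define \<phi> where "\<phi> = (\<lambda>F. if j \<in> F \<and> i \<notin> F \<and> insert i (F - {j}) \<notin> \<H>
          then insert i (F - {j}) else F)"
  have sh: "sh i j \<H> = \<phi> ` \<H>" unfolding sh_def \<phi>_def by simp
  have inj: "inj_on \<phi> \<H>"
  proof
    fix F G assume FG: "F \<in> \<H>" "G \<in> \<H>" "\<phi> F = \<phi> G"
    show "F = G"
    proof (cases "j \<in> F \<and> i \<notin> F \<and> insert i (F - {j}) \<notin> \<H>")
      case True
      note T = this
      show ?thesis
      proof (cases "j \<in> G \<and> i \<notin> G \<and> insert i (G - {j}) \<notin> \<H>")
        case True
        then have "insert i (F - {j}) = insert i (G - {j})" using T FG(3) unfolding \<phi>_def by auto
        then have "F - {j} = G - {j}" using T True by (metis Diff_iff insertI1 insert_Diff1 insert_absorb singletonD Diff_insert_absorb)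
        then show ?thesis using T True by (metis insert_Diff)
      next
        case False
        then have "\<phi> G = G" unfolding \<phi>_def by auto
        moreover have "\<phi> F = insert i (F - {j})" using T unfolding \<phi>_def by auto
        ultimately have "G = insert i (F - {j})" using FG(3) by simp
        then show ?thesis using T FG(2) by simp
      qed
    next
      case False
      note T = this
      show ?thesis
      proof (cases "j \<in> G \<and> i \<notin> G \<and> insert i (G - {j}) \<notin> \<H>")
        case True
        then have "\<phi> G = insert i (G - {j})" unfolding \<phi>_def by auto
        moreover have "\<phi> F = F" using T unfolding \<phi>_def by auto
        ultimately have "F = insert i (G - {j})" using FG(3) by simp
        then show ?thesis using True FG(1) by simp
      next
        case False
        then show ?thesis using T FG(3) unfolding \<phi>_def by auto
      qed
    qed
  qed
  have "wt (sh i j \<H>) = (\<Sum>F\<in>\<H>. \<Sum>(\<phi> F))" unfolding wt_def sh using sum.reindex[OF inj] by simp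
  also have "\<dots> < (\<Sum>F\<in>\<H>. \<Sum>F)"
  proof (rule sum_strict_mono_ex1[OF fin(1)])
    show "\<forall>F\<in>\<H>. \<Sum>(\<phi> F) \<le> \<Sum>F"
      using sum_shift_less fin ij unfolding \<phi>_def by (auto simp: less_imp_le)
    show "\<exists>F\<in>\<H>. \<Sum>(\<phi> F) < \<Sum>F"
      using sum_shift_less fin ij F0 unfolding \<phi>_def by (intro bexI[of _ F0]) auto
  qed
  finally show ?thesis unfolding wt_def .
qed

lemma B_pres:
  assumes "B n \<subseteq> \<H>" "1 \<le> i" "i < j"
  shows "B n \<subseteq> sh i j \<H>"
proof
  fix d assume d: "d \<in> B n"
  then obtain a b where ab: "d = {a,b}" "1 \<le> a" "a < b" "b \<le> n" "a + b \<le> n" unfolding B_def by auto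
  have "insert i (d - {j}) \<in> B n" if c: "j \<in> d" "i \<notin> d"
  proof (cases "j = b")
    case True
    then have e: "insert i (d - {j}) = {i, a}" using ab by auto
    show ?thesis
    proof (cases "i < a")
      case True
      then show ?thesis unfolding e B_def using ab assms \<open>j = b\<close> by (intro CollectI exI[of _ i] exI[of _ a]) auto
    next
      case False
      then have "a < i" using c ab by auto
      then show ?thesis unfolding e B_def using ab assms \<open>j = b\<close> by (intro CollectI exI[of _ a] exI[of _ i]) auto
    qed
  next
    case False
    then have "j = a" using c ab by auto
    then have e: "insert i (d - {j}) = {i, b}" using ab by auto
    show ?thesis unfolding e B_def using ab assms \<open>j = a\<close> by (intro CollectI exI[of _ i] exI[of _ b]) auto
  qed
  then show "d \<in> sh i j \<H>" using d assms(1) by (metis sh_keep sh_keep2 subsetD)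
qed

lemma terminate:
  "finite \<H> \<Longrightarrow> \<forall>F\<in>\<H>. finite F \<Longrightarrow> B n \<subseteq> \<H> \<Longrightarrow>
   \<exists>H'. (sh_step n)\<^sup>*\<^sup>* \<H> H' \<and> shifted n H' \<and> B n \<subseteq> H'"
proof (induction "wt \<H>" arbitrary: \<H> rule: less_induct)
  case less
  show ?case
  proof (cases "shifted n \<H>")
    case True
    then show ?thesis using less.prems by blast
  next
    case False
    then obtain F i j where F: "F \<in> \<H>" "i \<in> {1..n}" "j \<in> {1..n}" "i < j" "j \<in> F" "i \<notin> F"
       "insert i (F - {j}) \<notin> \<H>" unfolding shifted_def by blast
    have lt: "wt (sh i j \<H>) < wt \<H>" using sh_weight[OF less.prems(1,2) F(4) F(1) F(5-7)] .
    have f1: "finite (sh i j \<H>)" using less.prems(1) unfolding sh_def by simp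
    have f2: "\<forall>F\<in>sh i j \<H>. finite F" using less.prems(2) unfolding sh_def by auto
    have f3: "B n \<subseteq> sh i j \<H>" using B_pres less.prems(3) F by auto
    obtain H' where H': "(sh_step n)\<^sup>*\<^sup>* (sh i j \<H>) H'" "shifted n H'" "B n \<subseteq> H'"
      using less.hyps[OF lt f1 f2 f3] by blast
    have "sh_step n \<H> (sh i j \<H>)" unfolding sh_step_def using F by auto
    then show ?thesis using H' by (meson converse_rtranclp_into_rtranclp)
  qed
qed


lemma pair_exists:
  assumes "u \<in> V" "w \<in> V" "u \<noteq> w"
    and ind: "\<forall>T. T \<subseteq> V \<and> card T = 3 \<longrightarrow> (\<exists>e\<in>E. e \<subseteq> T)"
    and E2: "\<forall>e\<in>E. card e = 2"
  shows "\<exists>u\<in>V. \<exists>w\<in>V. u \<noteq> w \<and> (\<forall>x\<in>V - {u,w}. {u,x} \<in> E \<or> {x,w} \<in> E)"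
proof (cases "\<exists>u\<in>V. \<exists>w\<in>V. u \<noteq> w \<and> {u,w} \<notin> E")
  case True
  then obtain u w where uw: "u \<in> V" "w \<in> V" "u \<noteq> w" "{u,w} \<notin> E" by blast
  have "\<forall>x\<in>V - {u,w}. {u,x} \<in> E \<or> {x,w} \<in> E"
  proof
    fix x assume x: "x \<in> V - {u,w}"
    have "card {u,w,x} = 3" using uw x by auto
    then obtain e where e: "e \<in> E" "e \<subseteq> {u,w,x}" using ind uw x by (metis Diff_iff empty_subsetI insert_subset)
    have ce: "card e = 2" using E2 e by auto
    have "x \<in> e"
    proof (rule ccontr)
      assume "x \<notin> e"
      then have "e \<subseteq> {u,w}" using e by auto
      moreover have "card {u,w} = 2" using uw by auto
      ultimately have "e = {u,w}" using ce by (metis card_subset_eq finite.emptyI finite.insertI)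
      then show False using uw e by auto
    qed
    then obtain y where "e = {x,y}" using ce by (metis card_2_iff insert_commute insert_iff singleton_iff)
    then have "y = u \<or> y = w" using e ce by (auto simp: card_insert_if split: if_splits)
    then show "{u,x} \<in> E \<or> {x,w} \<in> E" using \<open>e = {x,y}\<close> e by (auto simp: insert_commute)
  qed
  then show ?thesis using uw by blast
next
  case False
  then show ?thesis using assms(1-3) by blast
qed

lemma label_exists:
  "finite V \<Longrightarrow> card V = n \<Longrightarrow> \<forall>e\<in>E. card e = 2 \<Longrightarrow>
   \<forall>T. T \<subseteq> V \<and> card T = 3 \<longrightarrow> (\<exists>e\<in>E. e \<subseteq> T) \<Longrightarrow>
   \<exists>f. bij_betw f V {1..n} \<and>
     (\<forall>u\<in>V. \<forall>w\<in>V. \<forall>x\<in>V. f u + f w = n + 1 \<and> f u < f x \<and> f x < f w \<longrightarrow> {u,x} \<in> E \<or> {x,w} \<in> E)"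
proof (induction n arbitrary: V rule: less_induct)
  case (less n)
  show ?case
  proof (cases "n < 2")
    case True
    obtain f where f: "bij_betw f V {1..n}"
      using less.prems(1,2) ex_bij_betw_nat_finite_1 bij_betw_inv by metis
    have "f u \<in> {1..n}" "f x \<in> {1..n}" if "u \<in> V" "x \<in> V" for u x
      using f that bij_betwE by blast+
    then show ?thesis using f True by (intro exI[of _ f]) force
  next
    case False
    have "\<not> card V \<le> Suc 0" using False less.prems by auto
    then obtain u0 w0 where "u0 \<in> V" "w0 \<in> V" "u0 \<noteq> w0"
      using card_le_Suc0_iff_eq[OF less.prems(1)] by blast
    then obtain u w where uw: "u \<in> V" "w \<in> V" "u \<noteq> w" and
      adj: "\<forall>x\<in>V - {u,w}. {u,x} \<in> E \<or> {x,w} \<in> E"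
      using pair_exists[OF _ _ _ less.prems(4,3)] by metis
    define V' where "V' = V - {u,w}"
    have cV': "card V' = n - 2" using uw less.prems(1,2) unfolding V'_def by (simp add: card_Diff_subset)
    have "\<exists>f. bij_betw f V' {1..n-2} \<and>
     (\<forall>u\<in>V'. \<forall>w\<in>V'. \<forall>x\<in>V'. f u + f w = n - 2 + 1 \<and> f u < f x \<and> f x < f w \<longrightarrow> {u,x} \<in> E \<or> {x,w} \<in> E)"
    proof (rule less.IH[of "n-2" V'])
      show "n - 2 < n" "finite V'" "card V' = n - 2" "\<forall>e\<in>E. card e = 2"
        using False less.prems cV' unfolding V'_def by auto
      show "\<forall>T. T \<subseteq> V' \<and> card T = 3 \<longrightarrow> (\<exists>e\<in>E. e \<subseteq> T)"
        using less.prems(4) unfolding V'_def by blast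
    qed
    then obtain f' where f': "bij_betw f' V' {1..n-2}"
      and f'p: "\<And>u w x. u\<in>V' \<Longrightarrow> w\<in>V' \<Longrightarrow> x\<in>V' \<Longrightarrow> f' u + f' w = n - 2 + 1 \<Longrightarrow> f' u < f' x \<Longrightarrow> f' x < f' w \<Longrightarrow> {u,x} \<in> E \<or> {x,w} \<in> E"
      by blast
    define f where "f = (\<lambda>v. if v = u then 1 else if v = w then n else f' v + 1)"
    have f'r: "v \<in> V' \<Longrightarrow> 1 \<le> f' v \<and> f' v \<le> n - 2" for v using f' bij_betwE by fastforce
    have VV': "V = insert u (insert w V')" "u \<notin> V'" "w \<notin> V'" using uw unfolding V'_def by auto
    have fv: "v \<in> V' \<Longrightarrow> f v = f' v + 1" for v using VV' unfolding f_def by auto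
    have inj: "inj_on f V"
    proof -
      have "inj_on f V'" using f' fv unfolding bij_betw_def inj_on_def by (metis add_right_cancel)
      moreover have "f u \<notin> f ` V'" "f w \<notin> f ` V'" "f u \<noteq> f w"
        using fv f'r False uw unfolding f_def by (auto; fastforce)+
      ultimately show ?thesis unfolding VV'(1) using VV'(2,3) uw(3) by (auto simp: inj_on_insert)
    qed
    have img: "f ` V = {1..n}"
    proof -
      have e2: "f' ` V' = {1..n-2}" using f' unfolding bij_betw_def by simp
      have "f ` V' = (\<lambda>k. k + 1) ` (f' ` V')" using fv by (simp add: image_image cong: image_cong)
      also have "\<dots> = (\<lambda>k. k + 1) ` {1..n-2}" using e2 by simp
      also have "\<dots> = {2..n-1}" using False by (auto simp: image_iff intro!: bexI[of _ "_ - 1"])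
      finally have "f ` V' = {2..n-1}" .
      moreover have "f u = 1" "f w = n" using uw unfolding f_def by auto
      ultimately show ?thesis using VV' False by auto
    qed
    have bij: "bij_betw f V {1..n}" using inj img unfolding bij_betw_def by simp
    have propf: "\<forall>u'\<in>V. \<forall>w'\<in>V. \<forall>x\<in>V. f u' + f w' = n + 1 \<and> f u' < f x \<and> f x < f w' \<longrightarrow> {u',x} \<in> E \<or> {x,w'} \<in> E"
    proof (intro ballI impI)
      fix u' w' x assume mem: "u' \<in> V" "w' \<in> V" "x \<in> V" and c: "f u' + f w' = n + 1 \<and> f u' < f x \<and> f x < f w'"
      have fu: "f u = 1" and fw: "f w = n" using uw unfolding f_def by auto
      have rng: "v \<in> V' \<Longrightarrow> 2 \<le> f v \<and> f v \<le> n - 1" for v using fv f'r False by fastforce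
      show "{u',x} \<in> E \<or> {x,w'} \<in> E"
      proof (cases "u' = u")
        case True
        then have "f w' = n" using c fu by simp
        moreover have "w' \<noteq> u" using c True by auto
        moreover have "w' \<notin> V'" using rng \<open>f w' = n\<close> \<open>\<not> n < 2\<close> by fastforce
        ultimately have "w' = w" using mem VV' by auto
        then have "x \<in> V - {u,w}" using c mem True fu fw by auto
        then show ?thesis using adj True \<open>w' = w\<close> by auto
      next
        case False
        have u'w: "u' \<noteq> w" using c fw by auto
        then have u'V: "u' \<in> V'" using False mem VV' by auto
        have "w' \<noteq> w" using c rng[OF u'V] fw by auto
        moreover have "w' \<noteq> u" using c rng[OF u'V] fu by auto
        ultimately have w'V: "w' \<in> V'" using mem VV' by auto
        have "x \<noteq> u" using c rng[OF u'V] fu by auto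
        moreover have "x \<noteq> w" using c rng[OF w'V] fw by auto
        ultimately have xV: "x \<in> V'" using mem VV' by auto
        have "f' u' + f' w' = n - 2 + 1" "f' u' < f' x" "f' x < f' w'"
          using c fv[OF u'V] fv[OF w'V] fv[OF xV] \<open>\<not> n < 2\<close> by auto
        then show ?thesis using f'p u'V w'V xV by blast
      qed
    qed
    show ?thesis using bij propf by blast
  qed
qed


lemma steps_finite:
  "(sh_step n)\<^sup>*\<^sup>* \<F> \<G> \<Longrightarrow> finite \<F> \<and> (\<forall>F\<in>\<F>. finite F) \<Longrightarrow> finite \<G> \<and> (\<forall>F\<in>\<G>. finite F)"
proof (induction rule: rtranclp_induct)
  case base
  then show ?case by simp
next
  case (step y z)
  then obtain i j where "z = sh i j y" unfolding sh_step_def by blast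
  then show ?case using step unfolding sh_def by auto
qed

theorem mainTheorem6:
  fixes V :: "'a set" and E :: "'a set set" and n :: nat
  assumes "finite V" and "card V = n"
    and "\<forall>e\<in>E. e \<subseteq> V \<and> card e = 2"
    and "\<forall>T. T \<subseteq> V \<and> card T = 3 \<longrightarrow> (\<exists>e\<in>E. e \<subseteq> T)"
  shows "\<exists>f Gc. bij_betw f V {1..n} \<and> comb_shifting n ((\<lambda>e. f ` e) ` E) Gc \<and> B n \<subseteq> Gc"
proof -
  obtain f where bij: "bij_betw f V {1..n}" and
    fp: "\<And>u w x. u\<in>V \<Longrightarrow> w\<in>V \<Longrightarrow> x\<in>V \<Longrightarrow> f u + f w = n + 1 \<Longrightarrow> f u < f x \<Longrightarrow> f x < f w \<Longrightarrow> {u,x} \<in> E \<or> {x,w} \<in> E"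
    using label_exists[OF assms(1,2) _ assms(4)] assms(3) by metis
  define G0 where "G0 = (\<lambda>e. f ` e) ` E"
  have img: "f ` V = {1..n}" using bij unfolding bij_betw_def by simp
  have C: "\<forall>k x. 1 \<le> k \<longrightarrow> k < x \<longrightarrow> x + k \<le> n \<longrightarrow> {k,x} \<in> G0 \<or> {x, n+1-k} \<in> G0"
  proof (intro allI impI)
    fix k x assume kx: "1 \<le> k" "k < x" "x + k \<le> n"
    have "k \<in> f ` V" "x \<in> f ` V" "n+1-k \<in> f ` V" using kx img by auto
    then obtain u x' w where uxw: "u \<in> V" "x' \<in> V" "w \<in> V" "f u = k" "f x' = x" "f w = n+1-k"
      by (metis imageE)
    have "{u,x'} \<in> E \<or> {x',w} \<in> E" using fp[OF uxw(1,3,2)] uxw kx by auto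
    then show "{k,x} \<in> G0 \<or> {x, n+1-k} \<in> G0" unfolding G0_def using uxw
      by (metis (no_types, lifting) image_empty image_eqI image_insert)
  qed
  define m where "m = n div 2"
  have P: "(sh_step n)\<^sup>*\<^sup>* G0 (famseq n G0 m)"
    "\<And>a b. 1 \<le> a \<Longrightarrow> a \<le> m \<Longrightarrow> a < b \<Longrightarrow> a + b \<le> n \<Longrightarrow> {a,b} \<in> famseq n G0 m"
    using famseq_props[OF C, of m] unfolding m_def by auto
  have Bsub: "B n \<subseteq> famseq n G0 m"
  proof
    fix d assume "d \<in> B n"
    then obtain a b where ab: "d = {a,b}" "1 \<le> a" "a < b" "a + b \<le> n" unfolding B_def by auto
    then have "a \<le> m" unfolding m_def by linarith
    then show "d \<in> famseq n G0 m" using P(2) ab by auto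
  qed
  have finE: "finite E" using assms(1,3) by (meson Pow_iff finite_Pow_iff rev_finite_subset subsetI)
  have fin0: "finite G0 \<and> (\<forall>F\<in>G0. finite F)" unfolding G0_def using finE assms(3)
    by (auto intro!: finite_imageI intro: card_ge_0_finite)
  have fin1: "finite (famseq n G0 m) \<and> (\<forall>F\<in>famseq n G0 m. finite F)"
    using steps_finite[OF P(1) fin0] .
  obtain H' where H': "(sh_step n)\<^sup>*\<^sup>* (famseq n G0 m) H'" "shifted n H'" "B n \<subseteq> H'"
    using terminate[of "famseq n G0 m" n] fin1 Bsub by blast
  have "comb_shifting n G0 H'" unfolding comb_shifting_def using P(1) H' by auto
  then show ?thesis using bij H'(3) unfolding G0_def by blast
qed

end
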